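(* Let $D_1, D_2, D_3$ be pairwise disjoint finite sets with $|D_1|=|D_2|=|D_3|=n$, and let $S=\{p_1,\dots,p_d\}$ be a set of $d \ge n$ distinct points of $D_1\times D_2\times D_3$. Let $m$ be an integer with $3 \le m \le 3n$. Construct the table $\mathcal{T}$ described in the context. Then there exists $S' \subseteq S$ with $|S'|=n$ such that no two points of $S'$ share a coordinate on any dimension (i.e., 3-dimensional matching on $S$ answers ``yes'') if and only if there is a $3$-diverse generalization of $\mathcal{T}$ with exactly $3n(d-1)$ stars.
   Context: Generalization and diversity: a microdata table is a multiset of tuples over categorical quasi-identifier (QI) attributes $A_1,\dots,A_d$ and a sensitive attribute (SA) $B$. A set $S$ of tuples is $l$-eligible if at most $|S|/l$ of its tuples share any identical SA value. A partition of the table into QI-groups defines a generalization: in each group, an attribute $A_i$ keeps its value if all tuples of the group agree on it, otherwise every tuple's $A_i$ value in that group is replaced by a star; SA values are kept. The generalization is $l$-diverse if every QI-group is $l$-eligible. Construction of $\mathcal{T}$: enumerate $D_1=\{v_1,\dots,v_n\}$, $D_2=\{v_{n+1},\dots,v_{2n}\}$, $D_3=\{v_{2n+1},\dots,v_{3n}\}$. For $j \in [1,3n]$ define an integer $u_j$: $u_j=j$ if $j \le m-2$; for $j \ge m-1$: if $m-1>2n$, $u_j=m-1$ for $j\in[m-1,3n-1]$ and $u_{3n}=m$; if $2n \ge m-1 > n$, $u_j=m-1$ for $j \in [m-1,2n]$ and $u_j=m$ for $j\in[2n+1,3n]$; if $n \ge m-1$, $u_j=m-2$ for $j\in[m-1,n]$,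 $u_j=m-1$ for $j\in[n+1,2n]$, $u_j=m$ for $j \in [2n+1,3n]$. The table $\mathcal{T}$ has QI attributes $A_1,\dots,A_d$ (with $A_i$ corresponding to $p_i$), SA $B$, and $3n$ rows $t_1,\dots,t_{3n}$, where $t_j[B]=u_j$ and, for each $i\in[1,d]$, $t_j[A_i]=0$ if $v_j$ is a coordinate of $p_i$, and $t_j[A_i]=u_j$ otherwise. *)

theory Defs
  imports Main "HOL-Library.Disjoint_Sets"
begin

text \<open>The SA value u_j of row j (rows indexed 1..3n) in the construction of table T.\<close>
definition u_val :: "nat \<Rightarrow> nat \<Rightarrow> nat \<Rightarrow> nat" where
  "u_val n m j =
     (if j \<le> m - 2 then j
      else if m - 1 > 2 * n then (if j \<le> 3 * n - 1 then m - 1 else m)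
      else if m - 1 > n then (if j \<le> 2 * n then m - 1 else m)
      else (if j \<le> n then m - 2 else if j \<le> 2 * n then m - 1 else m))"

definition is_coord :: "'a \<Rightarrow> 'a \<times> 'a \<times> 'a \<Rightarrow> bool" where
  "is_coord x p = (x = fst p \<or> x = fst (snd p) \<or> x = snd (snd p))"

text \<open>QI value t_j[A_i] of table T, given the enumeration v of D1 u D2 u D3 and p of S.\<close>
definition T_qi :: "nat \<Rightarrow> nat \<Rightarrow> (nat \<Rightarrow> 'a) \<Rightarrow> (nat \<Rightarrow> 'a \<times> 'a \<times> 'a) \<Rightarrow> nat \<Rightarrow> nat \<Rightarrow> nat" where
  "T_qi n m v p j i = (if is_coord (v j) (p i) then 0 else u_val n m j)"

definition l_eligible :: "nat \<Rightarrow> (nat \<Rightarrow> nat) \<Rightarrow> nat set \<Rightarrow> bool" where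
  "l_eligible l sa G = (\<forall>b. l * card {j \<in> G. sa j = b} \<le> card G)"

definition l_diverse :: "nat \<Rightarrow> (nat \<Rightarrow> nat) \<Rightarrow> nat set set \<Rightarrow> bool" where
  "l_diverse l sa P = (\<forall>G \<in> P. l_eligible l sa G)"

text \<open>Number of stars in the generalization given by partition P, QI columns 1..d:
  in a group G, attribute i is starred in all |G| tuples iff the tuples of G disagree on it.\<close>
definition num_stars :: "(nat \<Rightarrow> nat \<Rightarrow> nat) \<Rightarrow> nat \<Rightarrow> nat set set \<Rightarrow> nat" where
  "num_stars qi d P =
     (\<Sum>G\<in>P. \<Sum>i\<in>{1..d}. if (\<forall>j\<in>G. \<forall>k\<in>G. qi j i = qi k i) then 0 else card G)"

definition has_3dm :: "('a \<times> 'a \<times> 'a) set \<Rightarrow> nat \<Rightarrow> bool" where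
  "has_3dm S n = (\<exists>S' \<subseteq> S. card S' = n \<and>
     (\<forall>x\<in>S'. \<forall>y\<in>S'. x \<noteq> y \<longrightarrow>
        fst x \<noteq> fst y \<and> fst (snd x) \<noteq> fst (snd y) \<and> snd (snd x) \<noteq> snd (snd y)))"

end

theory Submission
  imports Defs
begin


lemma u_pos: "3 \<le> m \<Longrightarrow> 1 \<le> j \<Longrightarrow> u_val n m j \<ge> 1"
  unfolding u_val_def by auto

lemma u_distinct:
  assumes "3 \<le> m" "m \<le> 3*n" "1 \<le> j1" "j1 \<le> n" "n+1 \<le> j2" "j2 \<le> 2*n" "2*n+1 \<le> j3" "j3 \<le> 3*n"
  shows "u_val n m j1 \<noteq> u_val n m j2 \<and> u_val n m j1 \<noteq> u_val n m j3 \<and> u_val n m j2 \<noteq> u_val n m j3"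
  using assms unfolding u_val_def by (auto split: if_splits)

lemma card_filter_split: "finite A \<Longrightarrow> card {x\<in>A. P x} + card {x\<in>A. \<not> P x} = card A"
proof -
  assume f: "finite A"
  have "card ({x\<in>A. P x} \<union> {x\<in>A. \<not> P x}) = card {x\<in>A. P x} + card {x\<in>A. \<not> P x}"
    by (rule card_Un_disjoint) (use f in auto)
  moreover have "{x\<in>A. P x} \<union> {x\<in>A. \<not> P x} = A" by auto
  ultimately show ?thesis by simp
qed

lemma sum_if_const: "finite A \<Longrightarrow> (\<Sum>i\<in>A. if P i then 0 else (c::nat)) = c * card {i\<in>A. \<not> P i}"
proof -
  assume f: "finite A"
  have "(\<Sum>i\<in>{i\<in>A. \<not> P i}. c) = (\<Sum>i\<in>A. if \<not> P i then c else 0)"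
    by (rule sum.inter_filter[OF f])
  moreover have "(\<Sum>i\<in>A. if P i then 0 else c) = (\<Sum>i\<in>A. if \<not> P i then c else 0)" by (rule sum.cong) auto
  ultimately show ?thesis by (simp add: mult.commute)
qed



locale red =
  fixes D1 D2 D3 :: "'a set" and S :: "('a \<times> 'a \<times> 'a) set"
    and n d m :: nat and v :: "nat \<Rightarrow> 'a" and p :: "nat \<Rightarrow> 'a \<times> 'a \<times> 'a"
  assumes f1: "finite D1" and f2: "finite D2" and f3: "finite D3"
    and d12: "D1 \<inter> D2 = {}" and d13: "D1 \<inter> D3 = {}" and d23: "D2 \<inter> D3 = {}"
    and c1: "card D1 = n" and c2: "card D2 = n" and c3: "card D3 = n"
    and SD: "S \<subseteq> D1 \<times> D2 \<times> D3"
    and bp: "bij_betw p {1..d} S" and dn: "d \<ge> n"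
    and m3: "3 \<le> m" and m3n: "m \<le> 3 * n"
    and bv1: "bij_betw v {1..n} D1" and bv2: "bij_betw v {n+1..2*n} D2" and bv3: "bij_betw v {2*n+1..3*n} D3"
begin

definition C :: "'a \<times> 'a \<times> 'a \<Rightarrow> nat set" where
  "C x = {j \<in> {1..3*n}. is_coord (v j) x}"

definition agree :: "nat set \<Rightarrow> nat \<Rightarrow> bool" where
  "agree G i = (\<forall>j\<in>G. \<forall>k\<in>G. T_qi n m v p j i = T_qi n m v p k i)"

lemma vD1: "j \<in> {1..n} \<Longrightarrow> v j \<in> D1" using bv1 by (auto simp: bij_betw_def)
lemma vD2: "j \<in> {n+1..2*n} \<Longrightarrow> v j \<in> D2" using bv2 by (auto simp: bij_betw_def)
lemma vD3: "j \<in> {2*n+1..3*n} \<Longrightarrow> v j \<in> D3" using bv3 by (auto simp: bij_betw_def)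

lemma v_inj: "inj_on v {1..3*n}"
proof (rule inj_onI)
  fix j k assume j: "j \<in> {1..3*n}" and k: "k \<in> {1..3*n}" and e: "v j = v k"
  have i1: "inj_on v {1..n}" using bv1 by (auto simp: bij_betw_def)
  have i2: "inj_on v {n+1..2*n}" using bv2 by (auto simp: bij_betw_def)
  have i3: "inj_on v {2*n+1..3*n}" using bv3 by (auto simp: bij_betw_def)
  have jc: "j \<in> {1..n} \<or> j \<in> {n+1..2*n} \<or> j \<in> {2*n+1..3*n}" using j by auto
  have kc: "k \<in> {1..n} \<or> k \<in> {n+1..2*n} \<or> k \<in> {2*n+1..3*n}" using k by auto
  have x12: "v a \<noteq> v b" if "a \<in> {1..n}" "b \<in> {n+1..2*n}" for a b using vD1[OF that(1)] vD2[OF that(2)] d12 by auto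
  have x13: "v a \<noteq> v b" if "a \<in> {1..n}" "b \<in> {2*n+1..3*n}" for a b using vD1[OF that(1)] vD3[OF that(2)] d13 by auto
  have x23: "v a \<noteq> v b" if "a \<in> {n+1..2*n}" "b \<in> {2*n+1..3*n}" for a b using vD2[OF that(1)] vD3[OF that(2)] d23 by auto
  have s1: "j \<in> {1..n} \<Longrightarrow> k \<in> {1..n} \<Longrightarrow> j = k" using i1 e by (simp add: inj_on_eq_iff)
  have s2: "j \<in> {n+1..2*n} \<Longrightarrow> k \<in> {n+1..2*n} \<Longrightarrow> j = k" using i2 e by (simp add: inj_on_eq_iff)
  have s3: "j \<in> {2*n+1..3*n} \<Longrightarrow> k \<in> {2*n+1..3*n} \<Longrightarrow> j = k" using i3 e by (simp add: inj_on_eq_iff)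
  show "j = k"
    using jc kc s1 s2 s3 e x12[of j k] x12[of k j] x13[of j k] x13[of k j] x23[of j k] x23[of k j] by argo
qed

lemma coords:
  assumes "x \<in> D1 \<times> D2 \<times> D3"
  obtains j1 j2 j3 where "j1 \<in> {1..n}" "j2 \<in> {n+1..2*n}" "j3 \<in> {2*n+1..3*n}"
    "v j1 = fst x" "v j2 = fst (snd x)" "v j3 = snd (snd x)" "C x = {j1,j2,j3}"
proof -
  have "fst x \<in> v ` {1..n}" using assms bv1 by (auto simp: bij_betw_def)
  then obtain j1 where j1: "j1 \<in> {1..n}" "v j1 = fst x" by auto
  have "fst (snd x) \<in> v ` {n+1..2*n}" using assms bv2 by (auto simp: bij_betw_def)
  then obtain j2 where j2: "j2 \<in> {n+1..2*n}" "v j2 = fst (snd x)" by auto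
  have "snd (snd x) \<in> v ` {2*n+1..3*n}" using assms bv3 by (auto simp: bij_betw_def)
  then obtain j3 where j3: "j3 \<in> {2*n+1..3*n}" "v j3 = snd (snd x)" by auto
  have N: "j1 \<in> {1..3*n}" "j2 \<in> {1..3*n}" "j3 \<in> {1..3*n}" using j1 j2 j3 by auto
  have "C x = {j1,j2,j3}"
  proof
    show "{j1,j2,j3} \<subseteq> C x" using N j1 j2 j3 by (auto simp: C_def is_coord_def)
    show "C x \<subseteq> {j1,j2,j3}"
    proof
      fix j assume "j \<in> C x"
      then have j: "j \<in> {1..3*n}" "v j = v j1 \<or> v j = v j2 \<or> v j = v j3"
        using j1 j2 j3 by (auto simp: C_def is_coord_def)
      then show "j \<in> {j1,j2,j3}" using inj_on_eq_iff[OF v_inj j(1)] N by auto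
    qed
  qed
  then show ?thesis using that j1 j2 j3 by blast
qed

lemma card_C: "x \<in> D1 \<times> D2 \<times> D3 \<Longrightarrow> card (C x) = 3"
  by (erule coords) auto

lemma C_sub: "C x \<subseteq> {1..3*n}" by (auto simp: C_def)

lemma C_inj: assumes "x \<in> D1 \<times> D2 \<times> D3" "y \<in> D1 \<times> D2 \<times> D3" "C x = C y" shows "x = y"
proof -
  obtain j1 j2 j3 where j: "j1 \<in> {1..n}" "j2 \<in> {n+1..2*n}" "j3 \<in> {2*n+1..3*n}"
    "v j1 = fst x" "v j2 = fst (snd x)" "v j3 = snd (snd x)" "C x = {j1,j2,j3}"
    by (rule coords[OF assms(1)])
  obtain k1 k2 k3 where k: "k1 \<in> {1..n}" "k2 \<in> {n+1..2*n}" "k3 \<in> {2*n+1..3*n}"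
    "v k1 = fst y" "v k2 = fst (snd y)" "v k3 = snd (snd y)" "C y = {k1,k2,k3}"
    by (rule coords[OF assms(2)])
  have e: "{j1,j2,j3} = {k1,k2,k3}" using j k assms(3) by simp
  have "j1 \<in> {k1,k2,k3}" "j2 \<in> {k1,k2,k3}" "j3 \<in> {k1,k2,k3}" using e by auto
  then have "j1 = k1" "j2 = k2" "j3 = k3" using j(1-3) k(1-3) by auto
  then show ?thesis using j k by (simp add: prod_eq_iff)
qed

lemma C_elig: assumes "x \<in> D1 \<times> D2 \<times> D3" shows "l_eligible 3 (u_val n m) (C x)"
proof -
  obtain j1 j2 j3 where j: "j1 \<in> {1..n}" "j2 \<in> {n+1..2*n}" "j3 \<in> {2*n+1..3*n}"
    "C x = {j1,j2,j3}"
    by (rule coords[OF assms]) (rule that)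
  have u: "u_val n m j1 \<noteq> u_val n m j2 \<and> u_val n m j1 \<noteq> u_val n m j3 \<and> u_val n m j2 \<noteq> u_val n m j3"
    by (rule u_distinct[OF m3 m3n]) (use j(1-3) in simp_all)
  show ?thesis unfolding l_eligible_def
  proof
    fix b
    have fin: "finite {j \<in> C x. u_val n m j = b}" by (simp add: j(4))
    have "\<forall>a\<in>{j \<in> C x. u_val n m j = b}. \<forall>c\<in>{j \<in> C x. u_val n m j = b}. a = c"
    proof (intro ballI)
      fix a c assume a: "a \<in> {j \<in> C x. u_val n m j = b}" and c: "c \<in> {j \<in> C x. u_val n m j = b}"
      have a': "a = j1 \<or> a = j2 \<or> a = j3" "u_val n m a = b" using a j(4) by auto
      have c': "c = j1 \<or> c = j2 \<or> c = j3" "u_val n m c = b" using c j(4) by auto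
      show "a = c" using a'(1) c'(1)
        by (elim disjE) (use a'(2) c'(2) u in simp_all)
    qed
    then have "card {j \<in> C x. u_val n m j = b} \<le> Suc 0"
      using card_le_Suc0_iff_eq[OF fin] by blast
    then show "3 * card {j \<in> C x. u_val n m j = b} \<le> card (C x)"
      using card_C[OF assms] by simp
  qed
qed

lemma elig_card: assumes "finite G" "G \<noteq> {}" "l_eligible 3 (u_val n m) G" shows "3 \<le> card G"
proof -
  obtain j where j: "j \<in> G" using assms by blast
  have "finite {k \<in> G. u_val n m k = u_val n m j}" using assms by simp
  moreover have "j \<in> {k \<in> G. u_val n m k = u_val n m j}" using j by simp
  ultimately have "card {k \<in> G. u_val n m k = u_val n m j} \<noteq> 0"
    by (metis card_0_eq empty_iff)
  moreover have "3 * card {k \<in> G. u_val n m k = u_val n m j} \<le> card G" using assms(3) unfolding l_eligible_def by blast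
  ultimately show ?thesis by linarith
qed

lemma agree_sub:
  assumes G: "G \<subseteq> {1..3*n}" "G \<noteq> {}" "l_eligible 3 (u_val n m) G" and i: "i \<in> {1..d}" "agree G i"
  shows "G = C (p i)"
proof -
  have fG: "finite G" using G(1) finite_subset by blast
  have pS: "p i \<in> D1 \<times> D2 \<times> D3" using bp i SD by (auto simp: bij_betw_def)
  have sub: "G \<subseteq> C (p i)"
  proof
    fix j assume jG: "j \<in> G"
    show "j \<in> C (p i)"
    proof (rule ccontr)
      assume "j \<notin> C (p i)"
      then have nc: "\<not> is_coord (v j) (p i)" using jG G(1) by (auto simp: C_def)
      have j1: "j \<ge> 1" using jG G(1) by auto
      have upos: "u_val n m j \<ge> 1" using u_pos[OF m3 j1] .
      have all: "\<forall>k\<in>G. u_val n m k = u_val n m j"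
      proof
        fix k assume kG: "k \<in> G"
        have e: "T_qi n m v p k i = T_qi n m v p j i" using i(2) kG jG unfolding agree_def by blast
        have tj: "T_qi n m v p j i = u_val n m j" using nc by (simp add: T_qi_def)
        show "u_val n m k = u_val n m j"
          by (cases "is_coord (v k) (p i)") (use e tj upos in \<open>simp_all add: T_qi_def\<close>)
      qed
      then have eqG: "{k \<in> G. u_val n m k = u_val n m j} = G" by auto
      have "3 * card {k \<in> G. u_val n m k = u_val n m j} \<le> card G" using G(3) unfolding l_eligible_def by blast
      then have "3 * card G \<le> card G" by (simp only: eqG)
      then have "card G = 0" by simp
      then show False using fG G(2) by simp
    qed
  qed
  have "3 \<le> card G" using elig_card[OF fG G(2) G(3)] .
  then show ?thesis
    using card_subset_eq[OF finite_subset[OF C_sub] sub] card_C[OF pS] card_mono[OF finite_subset[OF C_sub] sub] by simp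
qed

lemma agree_C: assumes x: "x \<in> S" and i: "i \<in> {1..d}" shows "agree (C x) i \<longleftrightarrow> p i = x"
proof
  assume "p i = x"
  then show "agree (C x) i" by (auto simp: agree_def T_qi_def C_def)
next
  assume a: "agree (C x) i"
  have xD: "x \<in> D1 \<times> D2 \<times> D3" using x SD by auto
  have ne: "C x \<noteq> {}" using card_C[OF xD] by auto
  have e: "C x = C (p i)" by (rule agree_sub[OF C_sub ne C_elig[OF xD] i a])
  have pS: "p i \<in> D1 \<times> D2 \<times> D3" using bp i SD by (auto simp: bij_betw_def)
  show "p i = x" using C_inj[OF xD pS e] by simp
qed

lemma agree_card: assumes x: "x \<in> S" shows "card {i \<in> {1..d}. agree (C x) i} = 1"
proof -
  obtain i0 where i0: "i0 \<in> {1..d}" "p i0 = x" using bp x by (auto simp: bij_betw_def)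
  have ip: "inj_on p {1..d}" using bp by (simp add: bij_betw_def)
  have "{i \<in> {1..d}. agree (C x) i} = {i0}"
  proof (intro equalityI subsetI)
    fix i assume "i \<in> {i \<in> {1..d}. agree (C x) i}"
    then have "i \<in> {1..d}" "p i = p i0" using agree_C[OF x] i0 by auto
    then show "i \<in> {i0}" using inj_on_eq_iff[OF ip _ i0(1)] by simp
  next
    fix i assume "i \<in> {i0}" then show "i \<in> {i \<in> {1..d}. agree (C x) i}" using agree_C[OF x] i0 by auto
  qed
  then show ?thesis by simp
qed

end


context red
begin

lemma n_pos: "n \<ge> 1" using m3 m3n by linarith

lemma fin_S: "finite S"
  using SD f1 f2 f3 finite_subset by blast

lemma disj_coords:
  assumes "x \<in> D1 \<times> D2 \<times> D3" "y \<in> D1 \<times> D2 \<times> D3" "C x \<inter> C y = {}"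
  shows "fst x \<noteq> fst y \<and> fst (snd x) \<noteq> fst (snd y) \<and> snd (snd x) \<noteq> snd (snd y)"
proof -
  obtain j1 j2 j3 where j: "j1 \<in> {1..n}" "j2 \<in> {n+1..2*n}" "j3 \<in> {2*n+1..3*n}"
    "v j1 = fst x" "v j2 = fst (snd x)" "v j3 = snd (snd x)" "C x = {j1,j2,j3}"
    by (rule coords[OF assms(1)])
  have N: "j1 \<in> {1..3*n}" "j2 \<in> {1..3*n}" "j3 \<in> {1..3*n}" using j(1-3) by auto
  show ?thesis
  proof (intro conjI notI)
    assume "fst x = fst y"
    then have "j1 \<in> C y" using N j(4) by (simp add: C_def is_coord_def)
    then show False using assms(3) j(7) by blast
  next
    assume "fst (snd x) = fst (snd y)"
    then have "j2 \<in> C y" using N j(5) by (simp add: C_def is_coord_def)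
    then show False using assms(3) j(7) by blast
  next
    assume "snd (snd x) = snd (snd y)"
    then have "j3 \<in> C y" using N j(6) by (simp add: C_def is_coord_def)
    then show False using assms(3) j(7) by blast
  qed
qed

lemma stars_eq: "num_stars (T_qi n m v p) d P = (\<Sum>G\<in>P. card G * card {i\<in>{1..d}. \<not> agree G i})"
  unfolding num_stars_def
  by (rule sum.cong[OF refl], subst sum_if_const[symmetric]) (simp_all add: agree_def)

lemma fwd:
  assumes "has_3dm S n"
  shows "\<exists>P. partition_on {1..3*n} P \<and> l_diverse 3 (u_val n m) P \<and>
         num_stars (T_qi n m v p) d P = 3 * n * (d - 1)"
proof -
  obtain S' where S': "S' \<subseteq> S" "card S' = n" and
    M: "\<forall>x\<in>S'. \<forall>y\<in>S'. x \<noteq> y \<longrightarrow> fst x \<noteq> fst y \<and> fst (snd x) \<noteq> fst (snd y) \<and> snd (snd x) \<noteq> snd (snd y)"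
    using assms unfolding has_3dm_def by blast
  have SpD: "\<And>x. x \<in> S' \<Longrightarrow> x \<in> D1 \<times> D2 \<times> D3" using S'(1) SD by blast
  have finS': "finite S'" using S'(1) fin_S finite_subset by blast
  have dis: "C x \<inter> C y = {}" if x: "x \<in> S'" and y: "y \<in> S'" and xy: "x \<noteq> y" for x y
  proof (rule ccontr)
    assume "C x \<inter> C y \<noteq> {}"
    then obtain j where "j \<in> C x" "j \<in> C y" by blast
    then have cx: "is_coord (v j) x" and cy: "is_coord (v j) y" by (auto simp: C_def)
    have xD: "fst x \<in> D1" "fst (snd x) \<in> D2" "snd (snd x) \<in> D3" using SpD[OF x] by auto
    have yD: "fst y \<in> D1" "fst (snd y) \<in> D2" "snd (snd y) \<in> D3" using SpD[OF y] by auto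
    have m: "fst x \<noteq> fst y" "fst (snd x) \<noteq> fst (snd y)" "snd (snd x) \<noteq> snd (snd y)"
      using M x y xy by auto
    have e: "v j = fst x \<or> v j = fst (snd x) \<or> v j = snd (snd x)" using cx by (simp add: is_coord_def)
    have e': "v j = fst y \<or> v j = fst (snd y) \<or> v j = snd (snd y)" using cy by (simp add: is_coord_def)
    have dd: "\<And>z. z \<in> D1 \<Longrightarrow> z \<notin> D2" "\<And>z. z \<in> D1 \<Longrightarrow> z \<notin> D3" "\<And>z. z \<in> D2 \<Longrightarrow> z \<notin> D3"
      using d12 d13 d23 by auto
    show False using e e'
      by (elim disjE) (metis xD yD m dd)+
  qed
  define P where "P = C ` S'"
  have cardU: "card (\<Union>(C ` S')) = (\<Sum>x\<in>S'. card (C x))"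
    by (rule card_UN_disjoint[OF finS']) (use dis finite_subset[OF C_sub] in auto)
  also have "\<dots> = (\<Sum>x\<in>S'. 3)" using card_C SpD by simp
  also have "\<dots> = 3 * n" using S'(2) by simp
  finally have cU: "card (\<Union>P) = 3 * n" unfolding P_def .
  have UN: "\<Union>P = {1..3*n}"
    by (rule card_subset_eq) (use cU C_sub in \<open>auto simp: P_def\<close>)
  have Cinj: "inj_on C S'" using C_inj SpD by (meson inj_onI)
  have part: "partition_on {1..3*n} P"
    unfolding partition_on_def
  proof (intro conjI)
    show "\<Union>P = {1..3*n}" by (rule UN)
    show "disjoint P"
    proof (rule pairwiseI)
      fix G1 G2 assume "G1 \<in> P" "G2 \<in> P" "G1 \<noteq> G2"
      then obtain x y where "x \<in> S'" "y \<in> S'" "G1 = C x" "G2 = C y" "x \<noteq> y" unfolding P_def by blast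
      then show "disjnt G1 G2" using dis unfolding disjnt_def by blast
    qed
    show "{} \<notin> P" using card_C SpD unfolding P_def by fastforce
  qed
  have div: "l_diverse 3 (u_val n m) P"
    unfolding l_diverse_def P_def using C_elig SpD by blast
  have "num_stars (T_qi n m v p) d P = (\<Sum>G\<in>P. card G * card {i\<in>{1..d}. \<not> agree G i})"
    by (rule stars_eq)
  also have "\<dots> = (\<Sum>x\<in>S'. card (C x) * card {i\<in>{1..d}. \<not> agree (C x) i})"
    unfolding P_def by (rule sum.reindex[OF Cinj, unfolded comp_def])
  also have "\<dots> = (\<Sum>x\<in>S'. 3 * (d - 1))"
  proof (rule sum.cong[OF refl])
    fix x assume x: "x \<in> S'"
    have xS: "x \<in> S" using x S'(1) by blast
    have "card {i\<in>{1..d}. agree (C x) i} + card {i\<in>{1..d}. \<not> agree (C x) i} = d"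
      using card_filter_split[of "{1..d}"] by simp
    then have "card {i\<in>{1..d}. \<not> agree (C x) i} = d - 1" using agree_card[OF xS] by simp
    then show "card (C x) * card {i\<in>{1..d}. \<not> agree (C x) i} = 3 * (d - 1)"
      using card_C SpD[OF x] by simp
  qed
  also have "\<dots> = 3 * n * (d - 1)" using S'(2) by simp
  finally show ?thesis using part div by blast
qed

lemma bwd:
  assumes part: "partition_on {1..3*n} P" and div: "l_diverse 3 (u_val n m) P"
    and st: "num_stars (T_qi n m v p) d P = 3 * n * (d - 1)"
  shows "has_3dm S n"
proof -
  have UP: "\<Union>P = {1..3*n}" and dP: "disjoint P" and neP: "{} \<notin> P"
    using part unfolding partition_on_def by auto
  have Gsub: "G \<subseteq> {1..3*n}" if "G \<in> P" for G using UP that by blast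
  have Gne: "G \<noteq> {}" if "G \<in> P" for G using neP that by blast
  have Gfin: "finite G" if "G \<in> P" for G using Gsub[OF that] finite_subset by blast
  have Gel: "l_eligible 3 (u_val n m) G" if "G \<in> P" for G using div that unfolding l_diverse_def by blast
  have finP: "finite P" using UP by (metis finite_UnionD finite_atLeastAtMost)
  have ip: "inj_on p {1..d}" using bp by (simp add: bij_betw_def)
  have pS: "p i \<in> S" if "i \<in> {1..d}" for i using bp that by (auto simp: bij_betw_def)
  define a where "a G = card {i\<in>{1..d}. agree G i}" for G
  have a_le: "a G \<le> Suc 0" if G: "G \<in> P" for G
  proof -
  have fin: "finite {i\<in>{1..d}. agree G i}" by simp
  have "\<forall>i\<in>{i\<in>{1..d}. agree G i}. \<forall>i'\<in>{i\<in>{1..d}. agree G i}. i = i'"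
  proof (intro ballI)
    fix i i' assume i: "i \<in> {i\<in>{1..d}. agree G i}" and i': "i' \<in> {i\<in>{1..d}. agree G i}"
    have id: "i \<in> {1..d}" "i' \<in> {1..d}" "agree G i" "agree G i'" using i i' by auto
    have g1: "G = C (p i)" by (rule agree_sub[OF Gsub[OF G] Gne[OF G] Gel[OF G] id(1) id(3)])
    have g2: "G = C (p i')" by (rule agree_sub[OF Gsub[OF G] Gne[OF G] Gel[OF G] id(2) id(4)])
    have e: "C (p i) = C (p i')" using g1 g2 by simp
    have pd: "p i \<in> D1 \<times> D2 \<times> D3" "p i' \<in> D1 \<times> D2 \<times> D3" using pS[OF id(1)] pS[OF id(2)] SD by auto
    have "p i = p i'" by (rule C_inj[OF pd e])
    then show "i = i'" using inj_on_eq_iff[OF ip id(1) id(2)] by blast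
  qed
  then show ?thesis unfolding a_def using card_le_Suc0_iff_eq[OF fin] by blast
  qed
  have a1: "\<exists>x\<in>S. G = C x" if G: "G \<in> P" and aG: "a G = 1" for G
  proof -
    have "{i\<in>{1..d}. agree G i} \<noteq> {}"
    proof
      assume "{i\<in>{1..d}. agree G i} = {}"
      then have "a G = 0" unfolding a_def by simp
      then show False using aG by simp
    qed
    then obtain i where i: "i \<in> {1..d}" "agree G i" by blast
    have "G = C (p i)" by (rule agree_sub[OF Gsub[OF G] Gne[OF G] Gel[OF G] i])
    then show ?thesis using pS[OF i(1)] by blast
  qed
  have per: "card G * card {i\<in>{1..d}. \<not> agree G i} + (if a G = 1 then 3 else 0) = card G * d"
    if G: "G \<in> P" for G
  proof -
    have sp: "a G + card {i\<in>{1..d}. \<not> agree G i} = d"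
      unfolding a_def using card_filter_split[of "{1..d}"] by simp
    show ?thesis
    proof (cases "a G = 1")
      case True
      then obtain x where x: "x \<in> S" "G = C x" using a1[OF G] by blast
      have "card G = 3" using x card_C SD by auto
      then show ?thesis using True sp by (simp add: algebra_simps)
    next
      case False
      then have "a G = 0" using a_le[OF G] by simp
      then show ?thesis using False sp by simp
    qed
  qed
  define Q where "Q = {G\<in>P. a G = 1}"
  have s1: "(\<Sum>G\<in>P. if a G = 1 then 3 else 0) = 3 * card Q"
  proof -
    have "(\<Sum>G\<in>Q. (3::nat)) = (\<Sum>G\<in>P. if a G = 1 then 3 else 0)"
      unfolding Q_def by (rule sum.inter_filter[OF finP])
    then show ?thesis by simp
  qed
  have s2: "(\<Sum>G\<in>P. card G * card {i\<in>{1..d}. \<not> agree G i} + (if a G = 1 then 3 else 0)) = (\<Sum>G\<in>P. card G * d)"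
    by (rule sum.cong[OF refl]) (rule per)
  have s3: "(\<Sum>G\<in>P. card G * card {i\<in>{1..d}. \<not> agree G i} + (if a G = 1 then 3 else 0)) =
     (\<Sum>G\<in>P. card G * card {i\<in>{1..d}. \<not> agree G i}) + (\<Sum>G\<in>P. if a G = 1 then (3::nat) else 0)"
    by (rule sum.distrib)
  have s4a: "(\<Sum>G\<in>P. card G * d) = (\<Sum>G\<in>P. card G) * d" by (rule sum_distrib_right[symmetric])
  have s4b: "(\<Sum>G\<in>P. card G) = 3 * n" using card_Union_disjoint[OF dP Gfin] UP by simp
  have eq: "3 * n * (d - 1) + 3 * card Q = d * (3 * n)"
    using stars_eq[of P] st s1 s2 s3 s4a s4b by (simp add: mult.commute)
  have d1: "d \<ge> 1" using dn n_pos by linarith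
  have dd: "d * (3 * n) = 3 * n * (d - 1) + 3 * n" using d1 by (cases d) simp_all
  have cQ: "card Q = n" using eq dd by linarith
  define S' where "S' = {x\<in>S. C x \<in> P}"
  have CS: "C ` S' = Q"
  proof
    show "C ` S' \<subseteq> Q"
    proof
      fix G assume "G \<in> C ` S'"
      then obtain x where x: "x \<in> S" "C x \<in> P" "G = C x" unfolding S'_def by blast
      have "a G = 1" unfolding a_def x(3) by (rule agree_card[OF x(1)])
      then show "G \<in> Q" using x unfolding Q_def by simp
    qed
    show "Q \<subseteq> C ` S'"
    proof
      fix G assume "G \<in> Q"
      then have G: "G \<in> P" "a G = 1" unfolding Q_def by auto
      then obtain x where "x \<in> S" "G = C x" using a1[OF G(1) G(2)] by blast
      then show "G \<in> C ` S'" using G unfolding S'_def by blast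
    qed
  qed
  have Cinj: "inj_on C S'"
  proof (rule inj_onI)
    fix x y assume "x \<in> S'" "y \<in> S'" "C x = C y"
    moreover have "x \<in> D1 \<times> D2 \<times> D3" "y \<in> D1 \<times> D2 \<times> D3" using calculation(1,2) SD unfolding S'_def by auto
    ultimately show "x = y" using C_inj by blast
  qed
  have cS': "card S' = n" using card_image[OF Cinj] CS cQ by simp
  show ?thesis unfolding has_3dm_def
  proof (rule exI[of _ S'], intro conjI)
    show "S' \<subseteq> S" unfolding S'_def by blast
    show "card S' = n" by (rule cS')
    show "\<forall>x\<in>S'. \<forall>y\<in>S'. x \<noteq> y \<longrightarrow> fst x \<noteq> fst y \<and> fst (snd x) \<noteq> fst (snd y) \<and> snd (snd x) \<noteq> snd (snd y)"
    proof (intro ballI impI)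
    fix x y assume x: "x \<in> S'" and y: "y \<in> S'" and xy: "x \<noteq> y"
    have xD: "x \<in> D1 \<times> D2 \<times> D3" and yD: "y \<in> D1 \<times> D2 \<times> D3" using x y SD unfolding S'_def by auto
    have "C x \<noteq> C y" using C_inj[OF xD yD] xy by blast
    moreover have "C x \<in> P" "C y \<in> P" using x y unfolding S'_def by auto
    ultimately have "disjnt (C x) (C y)" using dP by (meson pairwiseD)
    then have "C x \<inter> C y = {}" by (simp add: disjnt_def)
    then show "fst x \<noteq> fst y \<and> fst (snd x) \<noteq> fst (snd y) \<and> snd (snd x) \<noteq> snd (snd y)"
      by (rule disj_coords[OF xD yD])
  qed
  qed
qed

lemma main: "has_3dm S n \<longleftrightarrow>
    (\<exists>P. partition_on {1..3*n} P \<and> l_diverse 3 (u_val n m) P \<and>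
         num_stars (T_qi n m v p) d P = 3 * n * (d - 1))"
  using fwd bwd by blast

end

theorem lemma3:
  fixes D1 D2 D3 :: "'a set" and S :: "('a \<times> 'a \<times> 'a) set"
    and n d m :: nat and v :: "nat \<Rightarrow> 'a" and p :: "nat \<Rightarrow> 'a \<times> 'a \<times> 'a"
  assumes "finite D1" "finite D2" "finite D3"
    and "D1 \<inter> D2 = {}" "D1 \<inter> D3 = {}" "D2 \<inter> D3 = {}"
    and "card D1 = n" "card D2 = n" "card D3 = n"
    and "S \<subseteq> D1 \<times> D2 \<times> D3"
    and "bij_betw p {1..d} S" and "d \<ge> n"
    and "3 \<le> m" "m \<le> 3 * n"
    and "bij_betw v {1..n} D1" "bij_betw v {n+1..2*n} D2" "bij_betw v {2*n+1..3*n} D3"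
  shows "has_3dm S n \<longleftrightarrow>
    (\<exists>P. partition_on {1..3*n} P \<and> l_diverse 3 (u_val n m) P \<and>
         num_stars (T_qi n m v p) d P = 3 * n * (d - 1))"
proof -
  interpret r: red D1 D2 D3 S n d m v p
    using assms by unfold_locales
  show ?thesis by (rule r.main)
qed

end
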